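(* Let $(Q,\mathcal D,L)$ be a $G$-Chaplygin system whose shape space $S=Q/G$ has dimension $r\ge 2$, and let $H$, $C_{ij}^k$, $\nu$ be as in the context. Suppose that: (1) the reduced equations of motion preserve the measure $\mu=\exp(\sigma(s))\,\nu$ for some $\sigma\in C^\infty(S)$; (2) the gyroscopic coefficients satisfy hypothesis (H) everywhere on $S$. Then, after the time and momentum reparametrisation $$dt=\exp\Big(\tfrac{\sigma(s)}{1-r}\Big)\,d\tau,\qquad p_i=\exp\Big(\tfrac{\sigma(s)}{1-r}\Big)\,\tilde p_i,\quad i=1,\dots,r,$$ the reduced equations of motion take the Hamiltonian form $$\frac{ds^i}{d\tau}=\frac{\partial\tilde H}{\partial\tilde p_i},\qquad \frac{d\tilde p_i}{d\tau}=-\frac{\partial\tilde H}{\partial s^i},\qquad i=1,\dots,r,$$ where $\tilde H(s,\tilde p)=H\big(s,\exp\big(\tfrac{\sigma(s)}{1-r}\big)\tilde p\big)$.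
   Context: A nonholonomic system is a triple $(Q,\mathcal D,L)$ with $Q$ an $n$-dimensional manifold, $\mathcal D\subset TQ$ a rank-$r$ non-integrable distribution, and $L=K-U$ where $K(v)=\tfrac12\langle v,v\rangle$ for a Riemannian metric $\langle\cdot,\cdot\rangle$ on $Q$ and $U:Q\to\mathbb R$. It is a $G$-Chaplygin system if a Lie group $G$ (Lie algebra $\mathfrak g$) acts freely and properly on $Q$ such that: (i) $G$ acts by isometries and $U$ is $G$-invariant; (ii) $T_q\Phi_g(\mathcal D_q)=\mathcal D_{\Phi_g(q)}$ for all $g\in G$; (iii) $T_qQ=\mathcal D_q\oplus(\mathfrak g\cdot q)$ for all $q\in Q$. The shape space is $S=Q/G$ (dimension $r$), with projection $\pi:Q\to S$. For $v\in T_{\pi(q)}S$, the horizontal lift $\mathrm{hor}_q(v)$ is the unique vector in $\mathcal D_q$ with $T_q\pi(\mathrm{hor}_q(v))=v$. In local coordinates $(s^1,\dots,s^r)$ on $S$, put $K_{ij}(s)=\langle\mathrm{hor}_q(\partial_{s^i}),\mathrm{hor}_q(\partial_{s^j})\rangle_q$ ($q\in\pi^{-1}(s)$), with inverse matrix $K^{ij}$; $U$ also denotes the induced function on $S$. The reduced Hamiltonian on $T^*S$ (canonical coordinates $(s,p)$) is $H(s,p)=\tfrac12\sum_{i,j}K^{ij}(s)p_ip_j+U(s)$. The gyroscopic coefficients are $C_{ij}^k(s)=\sum_{l}K^{kl}(s)\langle[\mathrm{hor}_q(\partial_{s^i}),\mathrm{hor}_q(\partial_{s^j})],\mathrm{hor}_q(\partial_{s^l})\rangle_q$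 ($[\cdot,\cdot]$ the Lie bracket of vector fields on $Q$; independent of $q\in\pi^{-1}(s)$); they satisfy $C_{ij}^k=-C_{ji}^k$ and are the components of a $(1,2)$ tensor field $\mathcal T=\sum C_{ij}^k\,ds^i\otimes ds^j\otimes\partial_{s^k}$ on $S$. The reduced equations of motion on $T^*S$ are $\frac{ds^i}{dt}=\frac{\partial H}{\partial p_i}$, $\frac{dp_i}{dt}=-\frac{\partial H}{\partial s^i}-\sum_{j,k}C_{ij}^kp_k\frac{\partial H}{\partial p_j}$, $i=1,\dots,r$. The Liouville volume on $T^*S$ is $\nu=ds^1\cdots ds^r\,dp_1\cdots dp_r$. Hypothesis (H): $C_{ij}^k=0$ whenever $i,j,k$ are pairwise distinct, and $C_{ij}^j=C_{ik}^k$ for all $j,k\neq i$. *)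

theory Defs
  imports "HOL-Analysis.Analysis"
begin

text \<open>Local coordinate rendering of the reduced Chaplygin dynamics on a chart
  domain of the shape space S (an open set of coordinates s in R^r; the index
  type 'r has r elements).  Points of T*S over the chart are pairs (s,p).\<close>

definition pd :: "(real^'r \<Rightarrow> real) \<Rightarrow> real^'r \<Rightarrow> 'r \<Rightarrow> real" where
  "pd f x i = deriv (\<lambda>h. f (x + h *\<^sub>R axis i 1)) 0"

fun dpart :: "'r list \<Rightarrow> (real^'r \<Rightarrow> real) \<Rightarrow> real^'r \<Rightarrow> real" where
  "dpart [] f = f"
| "dpart (i # is) f = (\<lambda>x. pd (dpart is f) x i)"

definition smooth_on :: "(real^'r) set \<Rightarrow> (real^'r \<Rightarrow> real) \<Rightarrow> bool" where
  "smooth_on \<Omega> f \<longleftrightarrow> (\<forall>is. \<forall>x\<in>\<Omega>. dpart is f differentiable (at x))"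

definition redH :: "(real^'r \<Rightarrow> real^'r^'r) \<Rightarrow> (real^'r \<Rightarrow> real)
    \<Rightarrow> real^'r \<Rightarrow> real^'r \<Rightarrow> real" where
  "redH K U s p = (1/2) * (\<Sum>i\<in>UNIV. \<Sum>j\<in>UNIV. matrix_inv (K s) $ i $ j * p $ i * p $ j) + U s"

definition dHds :: "(real^'r \<Rightarrow> real^'r \<Rightarrow> real) \<Rightarrow> real^'r \<Rightarrow> real^'r \<Rightarrow> 'r \<Rightarrow> real" where
  "dHds F s p i = pd (\<lambda>s'. F s' p) s i"

definition dHdp :: "(real^'r \<Rightarrow> real^'r \<Rightarrow> real) \<Rightarrow> real^'r \<Rightarrow> real^'r \<Rightarrow> 'r \<Rightarrow> real" where
  "dHdp F s p i = pd (\<lambda>p'. F s p') p i"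

text \<open>Components of the reduced vector field on T*S; C s i j k = C_{ij}^k(s).\<close>
definition redXs :: "(real^'r \<Rightarrow> real^'r \<Rightarrow> real) \<Rightarrow> real^'r \<Rightarrow> real^'r \<Rightarrow> real^'r" where
  "redXs F s p = (\<chi> i. dHdp F s p i)"

definition redXp :: "(real^'r \<Rightarrow> real^'r \<Rightarrow> real) \<Rightarrow> (real^'r \<Rightarrow> 'r \<Rightarrow> 'r \<Rightarrow> 'r \<Rightarrow> real)
    \<Rightarrow> real^'r \<Rightarrow> real^'r \<Rightarrow> real^'r" where
  "redXp F C s p = (\<chi> i. - dHds F s p i
       - (\<Sum>j\<in>UNIV. \<Sum>k\<in>UNIV. C s i j k * p $ k * dHdp F s p j))"

text \<open>Invariance of the smooth measure exp(sigma) ds dp under the flow of the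
  reduced equations (Liouville): div(exp(sigma) X) = 0 on T*S over the chart.\<close>
definition preserves_measure :: "(real^'r) set \<Rightarrow> (real^'r \<Rightarrow> real^'r \<Rightarrow> real)
    \<Rightarrow> (real^'r \<Rightarrow> 'r \<Rightarrow> 'r \<Rightarrow> 'r \<Rightarrow> real) \<Rightarrow> (real^'r \<Rightarrow> real) \<Rightarrow> bool" where
  "preserves_measure \<Omega> F C \<sigma> \<longleftrightarrow>
     (\<forall>s\<in>\<Omega>. \<forall>p.
        (\<Sum>i\<in>UNIV. pd (\<lambda>s'. exp (\<sigma> s') * redXs F s' p $ i) s i)
      + (\<Sum>i\<in>UNIV. pd (\<lambda>p'. exp (\<sigma> s) * redXp F C s p' $ i) p i) = 0)"

definition hypH :: "(real^'r) set \<Rightarrow> (real^'r \<Rightarrow> 'r \<Rightarrow> 'r \<Rightarrow> 'r \<Rightarrow> real) \<Rightarrow> bool" where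
  "hypH \<Omega> C \<longleftrightarrow> (\<forall>s\<in>\<Omega>.
     (\<forall>i j k. i \<noteq> j \<and> j \<noteq> k \<and> i \<noteq> k \<longrightarrow> C s i j k = 0) \<and>
     (\<forall>i j k. j \<noteq> i \<and> k \<noteq> i \<longrightarrow> C s i j j = C s i k k))"

end

theory Submission
  imports Defs
begin


lemma differentiable_prod':
  fixes f :: "'i \<Rightarrow> 'a::real_normed_vector \<Rightarrow> 'b::real_normed_field"
  assumes "\<And>i. i \<in> I \<Longrightarrow> f i differentiable (at x)"
  shows "(\<lambda>x. \<Prod>i\<in>I. f i x) differentiable (at x)"
proof -
  from assms have "\<forall>i\<in>I. \<exists>D. (f i has_derivative D) (at x)" by (auto simp: differentiable_def)
  then obtain D where "\<And>i. i \<in> I \<Longrightarrow> (f i has_derivative D i) (at x)" by metis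
  then show ?thesis unfolding differentiable_def by (blast intro: has_derivative_prod)
qed

lemma det_differentiable:
  fixes F :: "real^'r \<Rightarrow> real^'n^'n"
  assumes "\<And>i j. (\<lambda>x. F x $ i $ j) differentiable (at x0)"
  shows "(\<lambda>x. det (F x)) differentiable (at x0)"
  unfolding det_def
  by (intro differentiable_sum ballI differentiable_mult differentiable_const differentiable_prod' assms) auto

lemma invertible_K:
  fixes A :: "real^'n^'n"
  assumes "\<And>v. v \<noteq> 0 \<Longrightarrow> v \<bullet> (A *v v) > 0"
  shows "invertible A"
proof -
  have "\<forall>x. A *v x = 0 \<longrightarrow> x = 0"
    using assms by (metis inner_zero_right less_irrefl)
  then show ?thesis unfolding invertible_left_inverse matrix_left_invertible_ker .
qed

lemma matrix_inv_props:
  fixes A :: "real^'n^'n"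
  assumes "invertible A"
  shows "A ** matrix_inv A = mat 1" "matrix_inv A ** A = mat 1"
proof -
  have "\<exists>A'. A ** A' = mat 1 \<and> A' ** A = mat 1" using assms unfolding invertible_def .
  then have "A ** matrix_inv A = mat 1 \<and> matrix_inv A ** A = mat 1"
    unfolding matrix_inv_def by (rule someI_ex)
  then show "A ** matrix_inv A = mat 1" "matrix_inv A ** A = mat 1" by auto
qed

lemma matrix_inv_sym:
  fixes A :: "real^'n^'n"
  assumes "invertible A" "transpose A = A"
  shows "matrix_inv A $ i $ j = matrix_inv A $ j $ i"
proof -
  let ?M = "matrix_inv A"
  have "transpose ?M ** A = mat 1"
    using matrix_inv_props(1)[OF assms(1)] assms(2)
    by (metis matrix_transpose_mul transpose_mat)
  then have "transpose ?M = ?M"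
    by (metis matrix_inv_props(1)[OF assms(1)] matrix_mul_assoc matrix_mul_lid matrix_mul_rid)
  then show ?thesis by (metis transpose_def vec_lambda_beta)
qed

lemma matrix_inv_cramer:
  fixes A :: "real^'n^'n"
  assumes "invertible A"
  shows "matrix_inv A $ j $ k = det (\<chi> i l. if l = j then axis k 1 $ i else A $ i $ l) / det A"
proof -
  have d: "det A \<noteq> 0" using assms invertible_det_nz by blast
  have "A *v (matrix_inv A *v axis k 1) = axis k 1"
    by (simp add: matrix_vector_mul_assoc matrix_inv_props[OF assms])
  then have "matrix_inv A *v axis k 1 = (\<chi> j. det (\<chi> i l. if l = j then axis k 1 $ i else A $ i $ l) / det A)"
    using cramer[OF d] by blast
  moreover have "(matrix_inv A *v axis k 1) $ j = matrix_inv A $ j $ k"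
    by (simp add: matrix_vector_mult_def axis_def if_distrib cong: if_cong)
  ultimately show ?thesis by simp
qed




lemma pd_eq:
  fixes f :: "real^'r \<Rightarrow> real"
  assumes "(f has_derivative D) (at x)"
  shows "pd f x i = D (axis i 1)"
proof -
  have lin: "linear D" using assms has_derivative_linear by blast
  have "((\<lambda>h::real. x + h *\<^sub>R axis i 1) has_derivative (\<lambda>h. h *\<^sub>R axis i 1)) (at 0)"
    by (auto intro!: derivative_eq_intros)
  moreover have "(f has_derivative D) (at (x + 0 *\<^sub>R axis i 1))" using assms by simp
  ultimately have "((\<lambda>h. f (x + h *\<^sub>R axis i 1)) has_derivative (\<lambda>h. D (h *\<^sub>R axis i 1))) (at 0)"
    by (rule has_derivative_compose)
  then have "((\<lambda>h. f (x + h *\<^sub>R axis i 1)) has_real_derivative D (axis i 1)) (at 0)"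
    by (rule has_derivative_imp_has_field_derivative) (simp add: linear_scale[OF lin])
  then show ?thesis unfolding pd_def by (rule DERIV_imp_deriv)
qed

lemma grad_deriv:
  fixes f :: "real^'r \<Rightarrow> real"
  assumes "f differentiable (at x)"
  shows "(f has_derivative (\<lambda>v. \<Sum>i\<in>UNIV. v$i * pd f x i)) (at x)"
proof -
  obtain D where D: "(f has_derivative D) (at x)" using assms differentiable_def by blast
  have lin: "linear D" using D has_derivative_linear by blast
  have "D v = (\<Sum>i\<in>UNIV. v$i * pd f x i)" for v
  proof -
    have "D v = D (\<Sum>i\<in>UNIV. v$i *\<^sub>R axis i 1)"
      using basis_expansion[of v] by (simp add: scalar_mult_eq_scaleR)
    also have "\<dots> = (\<Sum>i\<in>UNIV. v$i * D (axis i 1))"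
      by (simp add: linear_sum[OF lin] linear_scale[OF lin])
    finally show ?thesis by (simp add: pd_eq[OF D])
  qed
  then have "D = (\<lambda>v. \<Sum>i\<in>UNIV. v$i * pd f x i)" by auto
  with D show ?thesis by simp
qed

lemma sum_axis_left[simp]: "(\<Sum>l\<in>UNIV. axis i (1::real) $ l * w l) = w i"
proof -
  have "(\<Sum>l\<in>UNIV. axis i (1::real) $ l * w l) = (\<Sum>l\<in>UNIV. if l = i then w l else 0)"
    by (rule sum.cong) (auto simp: axis_def)
  then show ?thesis by simp
qed

lemma inv_entry_differentiable:
  fixes K :: "real^'r \<Rightarrow> real^'n^'n"
  assumes "open \<Omega>" "x \<in> \<Omega>"
    and Kd: "\<And>i j y. y \<in> \<Omega> \<Longrightarrow> (\<lambda>x. K x $ i $ j) differentiable (at y)"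
    and inv: "\<And>y. y \<in> \<Omega> \<Longrightarrow> invertible (K y)"
  shows "(\<lambda>y. matrix_inv (K y) $ j $ k) differentiable (at x)"
proof -
  let ?g = "\<lambda>y. det (\<chi> i l. if l = j then axis k 1 $ i else K y $ i $ l) / det (K y)"
  have "?g differentiable (at x)"
  proof (intro differentiable_divide det_differentiable)
    show "(\<lambda>y. (\<chi> i l. if l = j then axis k 1 $ i else K y $ i $ l) $ a $ b) differentiable (at x)" for a b
      by (cases "b = j") (auto intro: Kd[OF assms(2)])
    show "(\<lambda>y. K y $ i $ l) differentiable (at x)" for i l by (rule Kd[OF assms(2)])
    show "det (K x) \<noteq> 0" using inv[OF assms(2)] invertible_det_nz by blast
  qed
  then obtain D where "(?g has_derivative D) (at x)" using differentiable_def by blast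
  then have "((\<lambda>y. matrix_inv (K y) $ j $ k) has_derivative D) (at x)"
    by (rule has_derivative_transform_within_open[OF _ assms(1,2)])
       (simp add: matrix_inv_cramer[OF inv])
  then show ?thesis using differentiable_def by blast
qed




lemma hd_nth: "((\<lambda>x::real^'r. x$j) has_derivative (\<lambda>x. x$j)) F"
  by (rule bounded_linear_imp_has_derivative) (rule bounded_linear_vec_nth)
lemmas my_intros = has_derivative_const hd_nth derivative_intros

lemma redH_scaled_p:
  fixes K :: "real^'r \<Rightarrow> real^'r^'r"
  shows "pd (\<lambda>q. redH K U x (c *\<^sub>R q)) q i
     = c^2 * (\<Sum>k\<in>UNIV. (matrix_inv (K x) $ i $ k + matrix_inv (K x) $ k $ i) / 2 * q$k)"
proof -
  let ?a = "\<lambda>j k. matrix_inv (K x) $ j $ k"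
  have F: "(\<lambda>q. redH K U x (c *\<^sub>R q)) = (\<lambda>q. 1/2 * (\<Sum>j\<in>UNIV. \<Sum>k\<in>UNIV. ?a j k * (c * q$j) * (c * q$k)) + U x)"
    by (simp add: redH_def)
  have "((\<lambda>q. 1/2 * (\<Sum>j\<in>UNIV. \<Sum>k\<in>UNIV. ?a j k * (c * q$j) * (c * q$k)) + U x) has_derivative
     (\<lambda>v. 1/2 * (\<Sum>j\<in>UNIV. \<Sum>k\<in>UNIV. ?a j k * (c * q$j) * (c * v$k) + ?a j k * (c * v$j) * (c * q$k)))) (at q)"
    apply (rule has_derivative_eq_rhs)
     apply (rule my_intros)+
    apply (simp add: algebra_simps)
    done
  then have "pd (\<lambda>q. redH K U x (c *\<^sub>R q)) q i =
     1/2 * (\<Sum>j\<in>UNIV. \<Sum>k\<in>UNIV. ?a j k * (c * q$j) * (c * axis i 1$k) + ?a j k * (c * axis i 1$j) * (c * q$k))"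
    unfolding F by (rule pd_eq)
  also have "\<dots> = 1/2 * (\<Sum>j\<in>UNIV. \<Sum>k\<in>UNIV. ?a j k * (c * q$j) * (c * axis i 1$k))
                + 1/2 * (\<Sum>j\<in>UNIV. \<Sum>k\<in>UNIV. ?a j k * (c * axis i 1$j) * (c * q$k))"
    by (simp add: sum.distrib algebra_simps)
  also have "(\<Sum>j\<in>UNIV. \<Sum>k\<in>UNIV. ?a j k * (c * q$j) * (c * axis i 1$k)) = (\<Sum>j\<in>UNIV. c^2 * ?a j i * q$j)"
  proof (rule sum.cong[OF refl])
    fix j
    have "(\<Sum>k\<in>UNIV. ?a j k * (c * q$j) * (c * axis i 1$k)) = (\<Sum>k\<in>UNIV. axis i 1$k * (c^2 * ?a j k * q$j))"
      by (rule sum.cong) (auto simp: algebra_simps power2_eq_square)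
    then show "(\<Sum>k\<in>UNIV. ?a j k * (c * q$j) * (c * axis i 1$k)) = c^2 * ?a j i * q$j" by simp
  qed
  also have "(\<Sum>j\<in>UNIV. \<Sum>k\<in>UNIV. ?a j k * (c * axis i 1$j) * (c * q$k)) = (\<Sum>j\<in>UNIV. axis i 1$j * (\<Sum>k\<in>UNIV. c^2 * ?a j k * q$k))"
    by (rule sum.cong) (auto simp: sum_distrib_left algebra_simps power2_eq_square intro!: sum.cong)
  also have "\<dots> = (\<Sum>k\<in>UNIV. c^2 * ?a i k * q$k)" by (rule sum_axis_left)
  finally show ?thesis
    by (simp add: sum_distrib_left sum_divide_distrib sum.distrib algebra_simps add_divide_distrib)
qed

lemma dHdp_redH:
  fixes K :: "real^'r \<Rightarrow> real^'r^'r"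
  shows "dHdp (redH K U) x q i = (\<Sum>k\<in>UNIV. (matrix_inv (K x) $ i $ k + matrix_inv (K x) $ k $ i) / 2 * q$k)"
  using redH_scaled_p[of K U x 1 q i] by (simp add: dHdp_def)



lemma aux_ring: "(a::real)*(e*p)*(d*q) + (a*(d*p) + b*(e*p))*(e*q) = b*p*q*e^2 + e*d*(a*p*q)*2"
  unfolding power2_eq_square by algebra

lemma redH_scaled_s:
  fixes K :: "real^'r \<Rightarrow> real^'r^'r"
  assumes da: "\<And>j k. (\<lambda>y. matrix_inv (K y) $ j $ k) differentiable (at x)"
    and dU: "U differentiable (at x)" and de: "e differentiable (at x)"
  shows "pd (\<lambda>y. redH K U y (e y *\<^sub>R P)) x i
    = 1/2 * (\<Sum>j\<in>UNIV. \<Sum>k\<in>UNIV. pd (\<lambda>y. matrix_inv (K y) $ j $ k) x i * P$j * P$k) * (e x)^2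
      + e x * pd e x i * (\<Sum>j\<in>UNIV. \<Sum>k\<in>UNIV. matrix_inv (K x) $ j $ k * P$j * P$k) + pd U x i"
proof -
  have F: "(\<lambda>y. redH K U y (e y *\<^sub>R P)) = (\<lambda>y. 1/2 * (\<Sum>j\<in>UNIV. \<Sum>k\<in>UNIV. matrix_inv (K y) $ j $ k * (e y * P$j) * (e y * P$k)) + U y)"
    by (simp add: redH_def)
  note ga = grad_deriv[OF da] and ge = grad_deriv[OF de] and gU = grad_deriv[OF dU]
  have "\<exists>D. ((\<lambda>y. 1/2 * (\<Sum>j\<in>UNIV. \<Sum>k\<in>UNIV. matrix_inv (K y) $ j $ k * (e y * P$j) * (e y * P$k)) + U y) has_derivative D) (at x)
     \<and> D (axis i 1) = 1/2 * (\<Sum>j\<in>UNIV. \<Sum>k\<in>UNIV. pd (\<lambda>y. matrix_inv (K y) $ j $ k) x i * P$j * P$k) * (e x)^2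
      + e x * pd e x i * (\<Sum>j\<in>UNIV. \<Sum>k\<in>UNIV. matrix_inv (K x) $ j $ k * P$j * P$k) + pd U x i"
    apply (rule exI, rule conjI)
     apply (rule ga ge gU my_intros)+
    apply simp
    apply (simp only: sum_distrib_left sum_distrib_right flip: sum.distrib)
    apply (rule sum.cong[OF refl])
    apply (rule sum.cong[OF refl])
    apply (rule aux_ring)
    done
  then obtain D where D1: "((\<lambda>y. 1/2 * (\<Sum>j\<in>UNIV. \<Sum>k\<in>UNIV. matrix_inv (K y) $ j $ k * (e y * P$j) * (e y * P$k)) + U y) has_derivative D) (at x)"
    and D2: "D (axis i 1) = 1/2 * (\<Sum>j\<in>UNIV. \<Sum>k\<in>UNIV. pd (\<lambda>y. matrix_inv (K y) $ j $ k) x i * P$j * P$k) * (e x)^2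
      + e x * pd e x i * (\<Sum>j\<in>UNIV. \<Sum>k\<in>UNIV. matrix_inv (K x) $ j $ k * P$j * P$k) + pd U x i"
    by blast
  show ?thesis unfolding F pd_eq[OF D1] D2 ..
qed

lemma dHds_redH:
  fixes K :: "real^'r \<Rightarrow> real^'r^'r"
  assumes da: "\<And>j k. (\<lambda>y. matrix_inv (K y) $ j $ k) differentiable (at x)"
    and dU: "U differentiable (at x)"
  shows "dHds (redH K U) x P i
    = 1/2 * (\<Sum>j\<in>UNIV. \<Sum>k\<in>UNIV. pd (\<lambda>y. matrix_inv (K y) $ j $ k) x i * P$j * P$k) + pd U x i"
proof -
  have "((\<lambda>y::real^'r. 1::real) has_derivative (\<lambda>v. 0)) (at x)" by (rule has_derivative_const)
  from pd_eq[OF this] have c: "pd (\<lambda>y. 1::real) x i = 0" by simp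
  show ?thesis
    using redH_scaled_s[OF da dU differentiable_const[of 1], of P i] by (simp add: dHds_def c)
qed


lemma if01_simps:
  "(x::real) * (if P then 1 else 0) = (if P then x else 0)"
  "(if P then 1 else 0) * (x::real) = (if P then x else 0)"
  "(if P then (x::real) else 0) * y = (if P then x * y else 0)"
  "y * (if P then (x::real) else 0) = (if P then y * x else 0)"
  "- (if P then (x::real) else 0) = (if P then - x else 0)"
  "(if P then (x::real) else 0) / y = (if P then x / y else 0)"
  by auto

lemma sum_if_out: "(\<Sum>x\<in>A. if P then f x else (0::real)) = (if P then \<Sum>x\<in>A. f x else 0)"
  by auto

lemma axis_nth1: "axis i (1::real) $ k = (if k = i then 1 else 0)"
  by (simp add: axis_def)

lemma term2:
  fixes K :: "real^'r \<Rightarrow> real^'r^'r"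
  assumes da: "\<And>j k. (\<lambda>y. matrix_inv (K y) $ j $ k) differentiable (at x)"
    and dU: "U differentiable (at x)"
  shows "pd (\<lambda>q. E * redXp (redH K U) C x q $ i) p i
    = E * ( - (\<Sum>k\<in>UNIV. (pd (\<lambda>y. matrix_inv (K y) $ i $ k) x i + pd (\<lambda>y. matrix_inv (K y) $ k $ i) x i) / 2 * p$k)
            - (\<Sum>j\<in>UNIV. C x i j i * (\<Sum>k\<in>UNIV. (matrix_inv (K x) $ j $ k + matrix_inv (K x) $ k $ j) / 2 * p$k))
            - (\<Sum>j\<in>UNIV. \<Sum>k\<in>UNIV. C x i j k * p$k * ((matrix_inv (K x) $ j $ i + matrix_inv (K x) $ i $ j) / 2)))"
proof -
  let ?da = "\<lambda>j k. pd (\<lambda>y. matrix_inv (K y) $ j $ k) x i"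
  let ?b = "\<lambda>j k. (matrix_inv (K x) $ j $ k + matrix_inv (K x) $ k $ j) / 2"
  have F: "(\<lambda>q. E * redXp (redH K U) C x q $ i) = (\<lambda>q. E * (- (1/2 * (\<Sum>j\<in>UNIV. \<Sum>k\<in>UNIV. ?da j k * q$j * q$k) + pd U x i)
      - (\<Sum>j\<in>UNIV. \<Sum>k\<in>UNIV. C x i j k * q$k * (\<Sum>l\<in>UNIV. ?b j l * q$l))))"
    by (simp add: redXp_def dHds_redH[OF da dU] dHdp_redH)
  have "\<exists>D. ((\<lambda>q. E * (- (1/2 * (\<Sum>j\<in>UNIV. \<Sum>k\<in>UNIV. ?da j k * q$j * q$k) + pd U x i)
      - (\<Sum>j\<in>UNIV. \<Sum>k\<in>UNIV. C x i j k * q$k * (\<Sum>l\<in>UNIV. ?b j l * q$l)))) has_derivative D) (at p)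
     \<and> D (axis i 1) = E * ( - (\<Sum>k\<in>UNIV. (?da i k + ?da k i) / 2 * p$k)
            - (\<Sum>j\<in>UNIV. C x i j i * (\<Sum>k\<in>UNIV. ?b j k * p$k))
            - (\<Sum>j\<in>UNIV. \<Sum>k\<in>UNIV. C x i j k * p$k * ?b j i))"
    apply (rule exI, rule conjI)
     apply (rule my_intros)+
    apply (simp add: axis_nth1 if01_simps sum.distrib sum_if_out cong: if_cong)
    apply (simp add: sum_distrib_right distrib_right sum.distrib add_divide_distrib)
    done
  then obtain D where D1: "((\<lambda>q. E * (- (1/2 * (\<Sum>j\<in>UNIV. \<Sum>k\<in>UNIV. ?da j k * q$j * q$k) + pd U x i)
      - (\<Sum>j\<in>UNIV. \<Sum>k\<in>UNIV. C x i j k * q$k * (\<Sum>l\<in>UNIV. ?b j l * q$l)))) has_derivative D) (at p)"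
    and D2: "D (axis i 1) = E * ( - (\<Sum>k\<in>UNIV. (?da i k + ?da k i) / 2 * p$k)
            - (\<Sum>j\<in>UNIV. C x i j i * (\<Sum>k\<in>UNIV. ?b j k * p$k))
            - (\<Sum>j\<in>UNIV. \<Sum>k\<in>UNIV. C x i j k * p$k * ?b j i))"
    by blast
  show ?thesis unfolding F pd_eq[OF D1] D2 ..
qed

lemma term1:
  fixes K :: "real^'r \<Rightarrow> real^'r^'r"
  assumes da: "\<And>j k. (\<lambda>y. matrix_inv (K y) $ j $ k) differentiable (at x)"
    and ds: "\<sigma> differentiable (at x)"
  shows "pd (\<lambda>y. exp (\<sigma> y) * redXs (redH K U) y p $ i) x i
    = exp (\<sigma> x) * pd \<sigma> x i * (\<Sum>k\<in>UNIV. (matrix_inv (K x) $ i $ k + matrix_inv (K x) $ k $ i) / 2 * p$k)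
      + exp (\<sigma> x) * (\<Sum>k\<in>UNIV. (pd (\<lambda>y. matrix_inv (K y) $ i $ k) x i + pd (\<lambda>y. matrix_inv (K y) $ k $ i) x i) / 2 * p$k)"
proof -
  have F: "(\<lambda>y. exp (\<sigma> y) * redXs (redH K U) y p $ i) = (\<lambda>y. exp (\<sigma> y) * (\<Sum>k\<in>UNIV. (matrix_inv (K y) $ i $ k + matrix_inv (K y) $ k $ i) / 2 * p$k))"
    by (simp add: redXs_def dHdp_redH)
  note ga = grad_deriv[OF da] and gs = grad_deriv[OF ds]
  have "\<exists>D. ((\<lambda>y. exp (\<sigma> y) * (\<Sum>k\<in>UNIV. (matrix_inv (K y) $ i $ k + matrix_inv (K y) $ k $ i) / 2 * p$k)) has_derivative D) (at x)
     \<and> D (axis i 1) = exp (\<sigma> x) * pd \<sigma> x i * (\<Sum>k\<in>UNIV. (matrix_inv (K x) $ i $ k + matrix_inv (K x) $ k $ i) / 2 * p$k)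
      + exp (\<sigma> x) * (\<Sum>k\<in>UNIV. (pd (\<lambda>y. matrix_inv (K y) $ i $ k) x i + pd (\<lambda>y. matrix_inv (K y) $ k $ i) x i) / 2 * p$k)"
    apply (rule exI, rule conjI)
     apply (rule ga gs my_intros)+
    apply (simp add: axis_nth1 if01_simps sum_if_out cong: if_cong)
    apply (simp add: algebra_simps sum_distrib_left sum_divide_distrib sum.distrib add_divide_distrib)
    apply (simp add: axis_nth1 if01_simps sum_if_out cong: if_cong)
    done
  then obtain D where D1: "((\<lambda>y. exp (\<sigma> y) * (\<Sum>k\<in>UNIV. (matrix_inv (K y) $ i $ k + matrix_inv (K y) $ k $ i) / 2 * p$k)) has_derivative D) (at x)"
    and D2: "D (axis i 1) = exp (\<sigma> x) * pd \<sigma> x i * (\<Sum>k\<in>UNIV. (matrix_inv (K x) $ i $ k + matrix_inv (K x) $ k $ i) / 2 * p$k)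
      + exp (\<sigma> x) * (\<Sum>k\<in>UNIV. (pd (\<lambda>y. matrix_inv (K y) $ i $ k) x i + pd (\<lambda>y. matrix_inv (K y) $ k $ i) x i) / 2 * p$k)"
    by blast
  show ?thesis unfolding F pd_eq[OF D1] D2 ..
qed


lemma triple_zero:
  fixes C :: "'r::finite \<Rightarrow> 'r \<Rightarrow> 'r \<Rightarrow> real"
  assumes "\<And>i j k. C i j k = - C j i k" "\<And>i j. b i j = b j i"
  shows "(\<Sum>i\<in>UNIV. \<Sum>j\<in>UNIV. \<Sum>k\<in>UNIV. C i j k * p k * b j i) = 0"
proof -
  define f where "f i j = (\<Sum>k\<in>UNIV. C i j k * p k * b j i)" for i j
  have fa: "f j i = - f i j" for i j
    unfolding f_def by (simp add: assms(1)[of j i] assms(2)[of i j] sum_negf[symmetric])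
  have "(\<Sum>i\<in>UNIV. \<Sum>j\<in>UNIV. f i j) = (\<Sum>j\<in>UNIV. \<Sum>i\<in>UNIV. f i j)" by (rule sum.swap)
  also have "\<dots> = (\<Sum>j\<in>UNIV. \<Sum>i\<in>UNIV. - f j i)" by (intro sum.cong refl fa)
  also have "\<dots> = - (\<Sum>j\<in>UNIV. \<Sum>i\<in>UNIV. f j i)" by (simp add: sum_negf)
  finally have "(\<Sum>i\<in>UNIV. \<Sum>j\<in>UNIV. f i j) = 0" by simp
  then show ?thesis unfolding f_def .
qed

lemma sum_combine:
  "(\<Sum>i\<in>S. E * a i + E * q i) + (\<Sum>i\<in>S. E * (- q i - r i - t i))
    = (E::real) * ((\<Sum>i\<in>S. a i) - (\<Sum>i\<in>S. r i) - (\<Sum>i\<in>S. t i))"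
  by (simp add: sum.distrib sum_subtractf sum_distrib_left algebra_simps sum_negf)

lemma measure_grad:
  fixes K :: "real^'r \<Rightarrow> real^'r^'r"
  assumes x: "x \<in> \<Omega>"
    and da: "\<And>j k. (\<lambda>y. matrix_inv (K y) $ j $ k) differentiable (at x)"
    and dU: "U differentiable (at x)" and ds: "\<sigma> differentiable (at x)"
    and pm: "preserves_measure \<Omega> (redH K U) C \<sigma>"
    and Cant: "\<And>i j k. C x i j k = - C x j i k"
    and sym: "\<And>j k. matrix_inv (K x) $ j $ k = matrix_inv (K x) $ k $ j"
    and inv: "matrix_inv (K x) ** K x = mat 1"
  shows "pd \<sigma> x m = (\<Sum>i\<in>UNIV. C x i m i)"
proof -
  let ?a = "\<lambda>j k. matrix_inv (K x) $ j $ k"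
  let ?E = "exp (\<sigma> x)"
  have hb: "(?a j k + ?a k j) / 2 = ?a j k" for j k using sym[of j k] by simp
  have key: "(\<Sum>i\<in>UNIV. pd \<sigma> x i * (\<Sum>k\<in>UNIV. ?a i k * p$k))
      - (\<Sum>i\<in>UNIV. \<Sum>j\<in>UNIV. C x i j i * (\<Sum>k\<in>UNIV. ?a j k * p$k)) = 0" for p
  proof -
    let ?Q = "\<lambda>i. (\<Sum>k\<in>UNIV. (pd (\<lambda>y. matrix_inv (K y) $ i $ k) x i + pd (\<lambda>y. matrix_inv (K y) $ k $ i) x i) / 2 * p$k)"
    let ?R = "\<lambda>i. (\<Sum>j\<in>UNIV. C x i j i * (\<Sum>k\<in>UNIV. ?a j k * p$k))"
    let ?T = "\<lambda>i. (\<Sum>j\<in>UNIV. \<Sum>k\<in>UNIV. C x i j k * p$k * ?a j i)"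
    have "(\<Sum>i\<in>UNIV. pd (\<lambda>y. exp (\<sigma> y) * redXs (redH K U) y p $ i) x i)
      + (\<Sum>i\<in>UNIV. pd (\<lambda>q. exp (\<sigma> x) * redXp (redH K U) C x q $ i) p i) = 0"
      by (rule pm[unfolded preserves_measure_def, rule_format, OF x])
    also have "(\<Sum>i\<in>UNIV. pd (\<lambda>y. exp (\<sigma> y) * redXs (redH K U) y p $ i) x i)
       = (\<Sum>i\<in>UNIV. ?E * (pd \<sigma> x i * (\<Sum>k\<in>UNIV. ?a i k * p$k)) + ?E * ?Q i)"
      by (simp add: term1[OF da ds] hb mult.assoc)
    also have "(\<Sum>i\<in>UNIV. pd (\<lambda>q. exp (\<sigma> x) * redXp (redH K U) C x q $ i) p i)
       = (\<Sum>i\<in>UNIV. ?E * (- ?Q i - ?R i - ?T i))"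
      by (simp add: term2[OF da dU] hb)
    finally have "?E * ((\<Sum>i\<in>UNIV. pd \<sigma> x i * (\<Sum>k\<in>UNIV. ?a i k * p$k)) - (\<Sum>i\<in>UNIV. ?R i) - (\<Sum>i\<in>UNIV. ?T i)) = 0"
      unfolding sum_combine .
    moreover have "(\<Sum>i\<in>UNIV. ?T i) = 0"
      by (rule triple_zero[where C="C x" and b="?a" and p="\<lambda>k. p$k"]) (rule Cant, rule sym)
    ultimately show ?thesis by simp
  qed
  let ?p = "K x *v axis m 1"
  have w: "(\<Sum>k\<in>UNIV. ?a j k * ?p$k) = axis m 1 $ j" for j
  proof -
    have "(\<Sum>k\<in>UNIV. ?a j k * ?p$k) = (matrix_inv (K x) *v ?p) $ j"
      by (simp add: matrix_vector_mult_def)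
    also have "\<dots> = axis m 1 $ j" by (simp add: matrix_vector_mul_assoc inv)
    finally show ?thesis .
  qed
  have "(\<Sum>i\<in>UNIV. \<Sum>j\<in>UNIV. C x i j i * axis m 1 $ j) = (\<Sum>i\<in>UNIV. C x i m i)"
    by (simp add: axis_nth1 if01_simps)
  then show ?thesis using key[of ?p] by (simp add: w mult.commute[of "pd \<sigma> x _"])
qed




lemma C_diag:
  fixes C :: "real^'r \<Rightarrow> 'r \<Rightarrow> 'r \<Rightarrow> 'r \<Rightarrow> real"
  assumes grad: "pd \<sigma> x j = (\<Sum>i\<in>UNIV. C x i j i)"
    and Cant: "\<And>i j k. C x i j k = - C x j i k"
    and hH: "\<And>i j k. j \<noteq> i \<Longrightarrow> k \<noteq> i \<Longrightarrow> C x i j j = C x i k k"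
    and r2: "CARD('r) \<ge> 2" and mj: "m \<noteq> j"
  shows "C x j m m = pd \<sigma> x j / (1 - real CARD('r))"
proof -
  have z: "C x j j j = 0" using Cant[of j j j] by simp
  have "pd \<sigma> x j = (\<Sum>i\<in>UNIV. - C x j i i)"
    unfolding grad by (rule sum.cong[OF refl], rule Cant)
  also have "\<dots> = - (\<Sum>i\<in>UNIV. C x j i i)" by (simp add: sum_negf)
  also have "(\<Sum>i\<in>UNIV. C x j i i) = C x j j j + (\<Sum>i\<in>UNIV - {j}. C x j i i)"
    by (rule sum.remove) auto
  also have "(\<Sum>i\<in>UNIV - {j}. C x j i i) = (\<Sum>i\<in>UNIV - {j}. C x j m m)"
    by (rule sum.cong[OF refl], rule hH) (use mj in auto)
  also have "\<dots> = (real CARD('r) - 1) * C x j m m"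
    by (simp add: card_Diff_singleton of_nat_diff)
  finally have "pd \<sigma> x j = - ((real CARD('r) - 1) * C x j m m)" by (simp add: z)
  moreover have "1 - real CARD('r) \<noteq> 0" using r2 by simp
  ultimately show ?thesis by (simp add: field_simps)
qed

lemma gyro:
  fixes C :: "real^'r \<Rightarrow> 'r \<Rightarrow> 'r \<Rightarrow> 'r \<Rightarrow> real"
  assumes Cant: "\<And>i j k. C x i j k = - C x j i k"
    and hH1: "\<And>i j k. i \<noteq> j \<Longrightarrow> j \<noteq> k \<Longrightarrow> i \<noteq> k \<Longrightarrow> C x i j k = 0"
    and cd: "\<And>j m. m \<noteq> j \<Longrightarrow> C x j m m = c j"
  shows "(\<Sum>j\<in>UNIV. \<Sum>k\<in>UNIV. C x i j k * p$k * v j)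
     = - (p$i) * (\<Sum>j\<in>UNIV. c j * v j) + c i * (\<Sum>j\<in>UNIV. p$j * v j)"
proof -
  have per: "(\<Sum>k\<in>UNIV. C x i j k * p$k * v j) = - c j * p$i * v j + c i * p$j * v j" for j
  proof (cases "j = i")
    case True
    have "C x i i k = 0" for k using Cant[of i i k] by simp
    then show ?thesis using True by simp
  next
    case False
    have "(\<Sum>k\<in>UNIV. C x i j k * p$k * v j)
       = (\<Sum>k\<in>UNIV. (if k = i then C x i j i * p$i * v j else 0) + (if k = j then C x i j j * p$j * v j else 0))"
      by (rule sum.cong[OF refl]) (use False hH1 in auto)
    also have "\<dots> = C x i j i * p$i * v j + C x i j j * p$j * v j"
      by (simp add: sum.distrib)
    also have "C x i j i = - c j" using Cant[of i j i] cd[of i j] False by simp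
    also have "C x i j j = c i" using cd[of j i] False by simp
    finally show ?thesis by simp
  qed
  have "(\<Sum>j\<in>UNIV. \<Sum>k\<in>UNIV. C x i j k * p$k * v j) = (\<Sum>j\<in>UNIV. - c j * p$i * v j + c i * p$j * v j)"
    by (rule sum.cong[OF refl], rule per)
  then show ?thesis
    by (simp add: sum.distrib sum_subtractf sum_distrib_left algebra_simps sum_negf)
qed

lemma scale_lin:
  fixes f :: real
  assumes "f \<noteq> 0"
  shows "f^2 * (\<Sum>k\<in>A. a k * (1/f * P k)) = f * (\<Sum>k\<in>A. a k * P k)"
proof -
  have "f^2 * (\<Sum>k\<in>A. a k * (1/f * P k)) = (\<Sum>k\<in>A. f * (a k * P k))"
    unfolding sum_distrib_left by (rule sum.cong[OF refl]) (use assms in \<open>simp add: power2_eq_square field_simps\<close>)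
  then show ?thesis by (simp add: sum_distrib_left)
qed

lemma quad_scale:
  fixes f :: real
  assumes "f \<noteq> 0"
  shows "(\<Sum>j\<in>A. \<Sum>k\<in>B. M j k * (1/f * P j) * (1/f * P k)) * f^2 = (\<Sum>j\<in>A. \<Sum>k\<in>B. M j k * P j * P k)"
  unfolding sum_distrib_right
  by (rule sum.cong[OF refl], rule sum.cong[OF refl]) (use assms in \<open>simp add: power2_eq_square field_simps\<close>)

theorem mainTheorem1:
  fixes \<Omega> :: "(real^'r) set"
    and K :: "real^'r \<Rightarrow> real^'r^'r"
    and U \<sigma> :: "real^'r \<Rightarrow> real"
    and C :: "real^'r \<Rightarrow> 'r \<Rightarrow> 'r \<Rightarrow> 'r \<Rightarrow> real"
    and s p :: "real \<Rightarrow> real^'r"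
    and J I :: "real set"
    and \<theta> :: "real \<Rightarrow> real"
  assumes r2: "CARD('r) \<ge> 2"
    and open_\<Omega>: "open \<Omega>"
    and K_smooth: "\<And>i j. smooth_on \<Omega> (\<lambda>x. K x $ i $ j)"
    and K_sym: "\<And>x. x \<in> \<Omega> \<Longrightarrow> transpose (K x) = K x"
    and K_posdef: "\<And>x v. x \<in> \<Omega> \<Longrightarrow> v \<noteq> 0 \<Longrightarrow> v \<bullet> (K x *v v) > 0"
    and U_smooth: "smooth_on \<Omega> U"
    and C_smooth: "\<And>i j k. smooth_on \<Omega> (\<lambda>x. C x i j k)"
    and C_antisym: "\<And>x i j k. x \<in> \<Omega> \<Longrightarrow> C x i j k = - C x j i k"
    and \<sigma>_smooth: "smooth_on \<Omega> \<sigma>"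
    and measure: "preserves_measure \<Omega> (redH K U) C \<sigma>"
    and hyp_H: "hypH \<Omega> C"
    and J_open: "open J"
    and sol_in: "\<And>t. t \<in> J \<Longrightarrow> s t \<in> \<Omega>"
    and sol_s: "\<And>t. t \<in> J \<Longrightarrow> (s has_vector_derivative redXs (redH K U) (s t) (p t)) (at t)"
    and sol_p: "\<And>t. t \<in> J \<Longrightarrow> (p has_vector_derivative redXp (redH K U) C (s t) (p t)) (at t)"
    and I_open: "open I"
    and \<theta>_into: "\<theta> ` I \<subseteq> J"
    and \<theta>_deriv: "\<And>\<tau>. \<tau> \<in> I \<Longrightarrow>
          (\<theta> has_real_derivative exp (\<sigma> (s (\<theta> \<tau>)) / (1 - real CARD('r)))) (at \<tau>)"
  shows "\<forall>\<tau>\<in>I.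
     (let f = (\<lambda>x. exp (\<sigma> x / (1 - real CARD('r))));
          Ht = (\<lambda>x q. redH K U x (f x *\<^sub>R q));
          S = (\<lambda>\<tau>'. s (\<theta> \<tau>'));
          Pt = (\<lambda>\<tau>'. (1 / f (S \<tau>')) *\<^sub>R p (\<theta> \<tau>'))
      in (S has_vector_derivative (\<chi> i. dHdp Ht (S \<tau>) (Pt \<tau>) i)) (at \<tau>)
       \<and> (Pt has_vector_derivative (\<chi> i. - dHds Ht (S \<tau>) (Pt \<tau>) i)) (at \<tau>))"
proof (intro ballI)
  fix \<tau> assume \<tau>I: "\<tau> \<in> I"
  let ?n = "real CARD('r)"
  let ?t = "\<theta> \<tau>"
  let ?x = "s (\<theta> \<tau>)"
  let ?P = "p (\<theta> \<tau>)"
  let ?f = "exp (\<sigma> (s (\<theta> \<tau>)) / (1 - real CARD('r)))"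
  have tJ: "?t \<in> J" using \<theta>_into \<tau>I by auto
  have x\<Omega>: "?x \<in> \<Omega>" using sol_in tJ by auto
  have fpos: "?f > 0" by simp
  have n1: "1 - ?n \<noteq> 0" using r2 by simp
  have invK: "invertible (K y)" if "y \<in> \<Omega>" for y
    by (rule invertible_K) (rule K_posdef[OF that])
  have Kd: "(\<lambda>x. K x $ i $ j) differentiable (at y)" if "y \<in> \<Omega>" for i j y
    using K_smooth[of i j] that unfolding smooth_on_def by (metis dpart.simps(1))
  have da: "(\<lambda>y. matrix_inv (K y) $ j $ k) differentiable (at ?x)" for j k
    by (rule inv_entry_differentiable[OF open_\<Omega> x\<Omega> Kd invK])
  have dU: "U differentiable (at ?x)"
    using U_smooth x\<Omega> unfolding smooth_on_def by (metis dpart.simps(1))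
  have ds: "\<sigma> differentiable (at ?x)"
    using \<sigma>_smooth x\<Omega> unfolding smooth_on_def by (metis dpart.simps(1))
  have sym: "matrix_inv (K ?x) $ j $ k = matrix_inv (K ?x) $ k $ j" for j k
    by (rule matrix_inv_sym[OF invK[OF x\<Omega>] K_sym[OF x\<Omega>]])
  have hb: "(matrix_inv (K ?x) $ j $ k + matrix_inv (K ?x) $ k $ j) / 2 = matrix_inv (K ?x) $ j $ k" for j k
    using sym[of j k] by simp
  have invr: "matrix_inv (K ?x) ** K ?x = mat 1" by (rule matrix_inv_props(2)[OF invK[OF x\<Omega>]])
  have Cant: "C ?x i j k = - C ?x j i k" for i j k using C_antisym[OF x\<Omega>] .
  have grad: "pd \<sigma> ?x m = (\<Sum>i\<in>UNIV. C ?x i m i)" for m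
    by (rule measure_grad[OF x\<Omega> da dU ds measure Cant sym invr])
  have hH1: "C ?x i j k = 0" if "i \<noteq> j" "j \<noteq> k" "i \<noteq> k" for i j k
    using hyp_H x\<Omega> that unfolding hypH_def by blast
  have hH2: "C ?x i j j = C ?x i k k" if "j \<noteq> i" "k \<noteq> i" for i j k
    using hyp_H x\<Omega> that unfolding hypH_def by blast
  define c where "c = (\<lambda>j. pd \<sigma> ?x j / (1 - ?n))"
  have cd: "C ?x j m m = c j" if "m \<noteq> j" for j m
    unfolding c_def by (rule C_diag[where C=C and x="?x" and \<sigma>=\<sigma>, OF grad[of j] Cant hH2 r2 that])
  define W where "W = (\<lambda>j. \<Sum>k\<in>UNIV. matrix_inv (K ?x) $ j $ k * ?P$k)"
  have dHdpW: "dHdp (redH K U) ?x ?P j = W j" for j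
    by (simp add: dHdp_redH hb W_def)
  have Xs: "redXs (redH K U) ?x ?P = (\<chi> j. W j)"
    by (simp add: redXs_def dHdpW)
  define Xp where "Xp = (\<chi> i. - (1/2 * (\<Sum>j\<in>UNIV. \<Sum>k\<in>UNIV. pd (\<lambda>y. matrix_inv (K y) $ j $ k) ?x i * ?P$j * ?P$k) + pd U ?x i)
       - (- (?P$i) * (\<Sum>j\<in>UNIV. c j * W j) + c i * (\<Sum>j\<in>UNIV. ?P$j * W j)))"
  have XpE: "redXp (redH K U) C ?x ?P = Xp"
    unfolding Xp_def redXp_def dHdpW dHds_redH[OF da dU]
    apply (rule arg_cong[where f=vec_lambda], rule ext)
    apply (subst gyro[where C=C and x="?x", OF Cant hH1 cd])
    apply simp_all
    done
  have d\<theta>: "(\<theta> has_vector_derivative ?f) (at \<tau>)"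
    using \<theta>_deriv[OF \<tau>I] by (simp add: has_real_derivative_iff_has_vector_derivative)
  have dst: "(s has_vector_derivative (\<chi> j. W j)) (at ?t)" using sol_s[OF tJ] Xs by simp
  have dS: "((\<lambda>\<tau>'. s (\<theta> \<tau>')) has_vector_derivative ?f *\<^sub>R (\<chi> j. W j)) (at \<tau>)"
    using vector_diff_chain_at[OF d\<theta> dst] by (simp add: o_def)
  have dpt: "(p has_vector_derivative Xp) (at ?t)" using sol_p[OF tJ] XpE by simp
  have dP\<theta>: "((\<lambda>\<tau>'. p (\<theta> \<tau>')) has_vector_derivative ?f *\<^sub>R Xp) (at \<tau>)"
    using vector_diff_chain_at[OF d\<theta> dpt] by (simp add: o_def)
  have d\<sigma>S: "((\<lambda>\<tau>'. \<sigma> (s (\<theta> \<tau>'))) has_real_derivative (\<Sum>l\<in>UNIV. ?f * W l * pd \<sigma> ?x l)) (at \<tau>)"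
  proof -
    have h1: "((\<lambda>\<tau>'. s (\<theta> \<tau>')) has_derivative (\<lambda>h. h *\<^sub>R (?f *\<^sub>R (\<chi> j. W j)))) (at \<tau>)"
      using dS by (simp add: has_vector_derivative_def)
    have "((\<lambda>\<tau>'. \<sigma> (s (\<theta> \<tau>'))) has_derivative (\<lambda>h. \<Sum>l\<in>UNIV. (h *\<^sub>R (?f *\<^sub>R (\<chi> j. W j)))$l * pd \<sigma> ?x l)) (at \<tau>)"
      by (rule has_derivative_compose[OF h1 grad_deriv[OF ds]])
    then show ?thesis
      by (rule has_derivative_imp_has_field_derivative) (simp add: sum_distrib_left algebra_simps)
  qed
  define g' where "g' = exp (- \<sigma> ?x / (1 - ?n)) * (- (\<Sum>l\<in>UNIV. ?f * W l * pd \<sigma> ?x l) / (1 - ?n))"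
  have dg: "((\<lambda>\<tau>'. exp (- \<sigma> (s (\<theta> \<tau>')) / (1 - ?n))) has_real_derivative g') (at \<tau>)"
    unfolding g'_def
    using DERIV_fun_exp[OF DERIV_cdivide[OF DERIV_minus[OF d\<sigma>S], of "1 - ?n"]] by simp
  have dPt: "((\<lambda>\<tau>'. exp (- \<sigma> (s (\<theta> \<tau>')) / (1 - ?n)) *\<^sub>R p (\<theta> \<tau>')) has_vector_derivative
      (exp (- \<sigma> ?x / (1 - ?n)) *\<^sub>R (?f *\<^sub>R Xp) + g' *\<^sub>R ?P)) (at \<tau>)"
    by (rule has_vector_derivative_scaleR[OF dg dP\<theta>])
  have Pt_eq: "(\<lambda>\<tau>'. (1 / exp (\<sigma> (s (\<theta> \<tau>')) / (1 - ?n))) *\<^sub>R p (\<theta> \<tau>'))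
      = (\<lambda>\<tau>'. exp (- \<sigma> (s (\<theta> \<tau>')) / (1 - ?n)) *\<^sub>R p (\<theta> \<tau>'))"
    by (simp add: exp_minus inverse_eq_divide)
  have e1: "(\<chi> i. dHdp (\<lambda>x q. redH K U x (exp (\<sigma> x / (1 - real CARD('r))) *\<^sub>R q)) ?x ((1 / ?f) *\<^sub>R ?P) i)
      = ?f *\<^sub>R (\<chi> j. W j)"
  proof -
    have "dHdp (\<lambda>x q. redH K U x (exp (\<sigma> x / (1 - real CARD('r))) *\<^sub>R q)) ?x ((1 / ?f) *\<^sub>R ?P) i = ?f * W i" for i
      unfolding dHdp_def redH_scaled_p hb W_def
      using scale_lin[where f="?f" and A=UNIV and a="\<lambda>k. matrix_inv (K ?x) $ i $ k" and P="\<lambda>k. ?P$k"] by simp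
    then show ?thesis by (simp add: vec_eq_iff)
  qed
  have e2: "(\<chi> i. - dHds (\<lambda>x q. redH K U x (exp (\<sigma> x / (1 - real CARD('r))) *\<^sub>R q)) ?x ((1 / ?f) *\<^sub>R ?P) i)
      = exp (- \<sigma> ?x / (1 - ?n)) *\<^sub>R (?f *\<^sub>R Xp) + g' *\<^sub>R ?P"
  proof -
    note gs = grad_deriv[OF ds]
    have "\<exists>D. ((\<lambda>y. exp (\<sigma> y / (1 - ?n))) has_derivative D) (at ?x) \<and> D (axis i 1) = ?f * c i" for i
      apply (rule exI, rule conjI)
       apply (rule gs my_intros)+
      using r2 apply (simp_all add: c_def)
      done
    note ex = this
    have pde: "pd (\<lambda>y. exp (\<sigma> y / (1 - ?n))) ?x i = ?f * c i" for i
    proof -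
      from ex[of i] obtain D where D1: "((\<lambda>y. exp (\<sigma> y / (1 - ?n))) has_derivative D) (at ?x)"
        and D2: "D (axis i 1) = ?f * c i" by blast
      show ?thesis using pd_eq[OF D1] D2 by simp
    qed
    have de: "(\<lambda>y. exp (\<sigma> y / (1 - ?n))) differentiable (at ?x)"
      using ex[of undefined] unfolding differentiable_def by blast
    have fnz: "?f \<noteq> 0" by simp
    have Einv: "exp (- \<sigma> ?x / (1 - ?n)) * ?f = 1"
      by (simp add: exp_minus)
    have g'_eq: "g' = - (\<Sum>l\<in>UNIV. c l * W l)"
    proof -
      have "g' = - ((exp (- \<sigma> ?x / (1 - ?n)) * ?f) * ((\<Sum>l\<in>UNIV. W l * pd \<sigma> ?x l) / (1 - ?n)))"
        unfolding g'_def by (simp add: sum_distrib_left mult.assoc)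
      also have "\<dots> = - (\<Sum>l\<in>UNIV. c l * W l)"
        unfolding Einv c_def by (simp add: sum_divide_distrib mult.commute)
      finally show ?thesis .
    qed
    have PW: "(\<Sum>j\<in>UNIV. ?P$j * W j) = (\<Sum>j\<in>UNIV. \<Sum>k\<in>UNIV. matrix_inv (K ?x) $ j $ k * ?P$j * ?P$k)"
      unfolding W_def sum_distrib_left by (rule sum.cong[OF refl], rule sum.cong[OF refl]) (simp add: mult_ac)
    have L: "dHds (\<lambda>x q. redH K U x (exp (\<sigma> x / (1 - real CARD('r))) *\<^sub>R q)) ?x ((1 / ?f) *\<^sub>R ?P) i
        = 1/2 * (\<Sum>j\<in>UNIV. \<Sum>k\<in>UNIV. pd (\<lambda>y. matrix_inv (K y) $ j $ k) ?x i * ?P$j * ?P$k)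
          + c i * (\<Sum>j\<in>UNIV. \<Sum>k\<in>UNIV. matrix_inv (K ?x) $ j $ k * ?P$j * ?P$k) + pd U ?x i" for i
    proof -
      have "dHds (\<lambda>x q. redH K U x (exp (\<sigma> x / (1 - real CARD('r))) *\<^sub>R q)) ?x ((1 / ?f) *\<^sub>R ?P) i
        = 1/2 * ((\<Sum>j\<in>UNIV. \<Sum>k\<in>UNIV. pd (\<lambda>y. matrix_inv (K y) $ j $ k) ?x i * (1/?f * ?P$j) * (1/?f * ?P$k)) * ?f^2)
          + c i * ((\<Sum>j\<in>UNIV. \<Sum>k\<in>UNIV. matrix_inv (K ?x) $ j $ k * (1/?f * ?P$j) * (1/?f * ?P$k)) * ?f^2) + pd U ?x i"
        unfolding dHds_def redH_scaled_s[OF da dU de] pde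
        by (simp add: power2_eq_square mult_ac)
      then show ?thesis
        unfolding quad_scale[OF fnz] .
    qed
    have "- dHds (\<lambda>x q. redH K U x (exp (\<sigma> x / (1 - real CARD('r))) *\<^sub>R q)) ?x ((1 / ?f) *\<^sub>R ?P) i
       = exp (- \<sigma> ?x / (1 - ?n)) * (?f * Xp $ i) + g' * ?P $ i" for i
    proof -
      have hX: "exp (- \<sigma> ?x / (1 - ?n)) * (?f * Xp $ i) = Xp $ i"
        using Einv by (metis mult.assoc mult_1)
      show ?thesis
        unfolding hX unfolding L g'_eq Xp_def vec_lambda_beta PW by (simp add: algebra_simps)
    qed
    then show ?thesis by (simp add: vec_eq_iff)
  qed
  show "let f = (\<lambda>x. exp (\<sigma> x / (1 - real CARD('r))));
          Ht = (\<lambda>x q. redH K U x (f x *\<^sub>R q));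
          S = (\<lambda>\<tau>'. s (\<theta> \<tau>'));
          Pt = (\<lambda>\<tau>'. (1 / f (S \<tau>')) *\<^sub>R p (\<theta> \<tau>'))
      in (S has_vector_derivative (\<chi> i. dHdp Ht (S \<tau>) (Pt \<tau>) i)) (at \<tau>)
       \<and> (Pt has_vector_derivative (\<chi> i. - dHds Ht (S \<tau>) (Pt \<tau>) i)) (at \<tau>)"
    unfolding Let_def e1 e2 Pt_eq using dS dPt by simp
qed


end
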